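(* Let $d=2$, let $M\ge1$ be a real number, let $\alpha,\lambda\in\overline{\mathbb Q}$, and let $|\cdot|_v$ be an absolute value on $\overline{\mathbb Q}$. If $|\alpha|_v\ge\frac{1}{M\cdot|\lambda|_v}\ge2M$, then for all integers $0\le n_0\le n$, $$\left|\frac{\log M_{n,v}}{2^n}-\frac{\log M_{n_0,v}}{2^{n_0}}\right|\le4\log 2.$$
   Context: Define $A_0=\alpha$, $B_0=1$, and for $n\ge0$, $A_{n+1}=A_n^2+\lambda B_n^2$, $B_{n+1}=A_nB_n$ (so $[A_n:B_n]$ is the $n$-th iterate of $\alpha$ under $z\mapsto(z^2+\lambda)/z$). Set $M_{n,v}=\max\{|A_n|_v,|B_n|_v\}$. *)

theory Defs
  imports Complex_Main "HOL-Computational_Algebra.Polynomial"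
begin

definition Qbar :: "complex set" where
  "Qbar = {z. algebraic z}"

definition is_abs_value_on_Qbar :: "(complex \<Rightarrow> real) \<Rightarrow> bool" where
  "is_abs_value_on_Qbar v \<longleftrightarrow>
     (\<forall>x\<in>Qbar. v x \<ge> 0) \<and>
     (\<forall>x\<in>Qbar. v x = 0 \<longleftrightarrow> x = 0) \<and>
     (\<forall>x\<in>Qbar. \<forall>y\<in>Qbar. v (x * y) = v x * v y) \<and>
     (\<forall>x\<in>Qbar. \<forall>y\<in>Qbar. v (x + y) \<le> v x + v y)"

fun AB :: "complex \<Rightarrow> complex \<Rightarrow> nat \<Rightarrow> complex \<times> complex" where
  "AB al lam 0 = (al, 1)"
| "AB al lam (Suc n) =
     (let (a, b) = AB al lam n in (a\<^sup>2 + lam * b\<^sup>2, a * b))"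

definition A_seq :: "complex \<Rightarrow> complex \<Rightarrow> nat \<Rightarrow> complex" where
  "A_seq al lam n = fst (AB al lam n)"

definition B_seq :: "complex \<Rightarrow> complex \<Rightarrow> nat \<Rightarrow> complex" where
  "B_seq al lam n = snd (AB al lam n)"

definition Mnv :: "(complex \<Rightarrow> real) \<Rightarrow> complex \<Rightarrow> complex \<Rightarrow> nat \<Rightarrow> real" where
  "Mnv v al lam n = max (v (A_seq al lam n)) (v (B_seq al lam n))"

end

theory Submission
  imports Defs "Jordan_Normal_Form.Char_Poly"
begin


lemma good_alg:
  fixes Q :: "rat mat" and w :: "complex vec"
  assumes "Q \<in> carrier_mat N N" "w \<in> carrier_vec N" "w \<noteq> 0\<^sub>v N" "map_mat of_rat Q *\<^sub>v w = z \<cdot>\<^sub>v w"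
  shows "algebraic z"
proof -
  let ?Q = "map_mat of_rat Q :: complex mat"
  have Qc: "?Q \<in> carrier_mat N N" using assms by simp
  have "eigenvector ?Q w z" unfolding eigenvector_def using assms by auto
  then have "eigenvalue ?Q z" unfolding eigenvalue_def by auto
  then have "poly (char_poly ?Q) z = 0" using eigenvalue_root_char_poly[OF Qc] by simp
  also have "char_poly ?Q = map_poly of_rat (char_poly Q)" using of_rat_hom.char_poly_hom[OF assms(1)] by simp
  finally have r: "poly (map_poly of_rat (char_poly Q)) z = 0".
  have "char_poly Q \<noteq> 0" using degree_monic_char_poly[OF assms(1)] by auto
  then have nz: "map_poly (of_rat::rat\<Rightarrow>complex) (char_poly Q) \<noteq> 0" by simp
  show ?thesis by (rule algebraicI'[OF _ nz r]) (simp add: coeff_map_poly)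
qed

definition good :: "nat \<Rightarrow> complex vec \<Rightarrow> complex \<Rightarrow> bool" where
  "good N w z \<longleftrightarrow> (\<exists>Q::rat mat. Q \<in> carrier_mat N N \<and> map_mat of_rat Q *\<^sub>v w = z \<cdot>\<^sub>v w)"

lemma good_add: assumes "w \<in> carrier_vec N" "good N w x" "good N w y" shows "good N w (x + y)"
proof -
  obtain Q1 Q2 where Q: "Q1 \<in> carrier_mat N N" "map_mat of_rat Q1 *\<^sub>v w = x \<cdot>\<^sub>v w"
     "Q2 \<in> carrier_mat N N" "map_mat of_rat Q2 *\<^sub>v w = y \<cdot>\<^sub>v w" using assms unfolding good_def by blast
  have "map_mat of_rat (Q1 + Q2) = map_mat of_rat Q1 + (map_mat of_rat Q2 :: complex mat)"
    using Q by (auto simp: of_rat_add)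
  then have "map_mat of_rat (Q1 + Q2) *\<^sub>v w = map_mat of_rat Q1 *\<^sub>v w + (map_mat of_rat Q2 :: complex mat) *\<^sub>v w"
    using Q assms(1) by (simp add: add_mult_distrib_mat_vec[of _ N N])
  also have "\<dots> = (x + y) \<cdot>\<^sub>v w" using Q by (simp add: add_smult_distrib_vec)
  finally show ?thesis unfolding good_def using Q by (intro exI[of _ "Q1+Q2"]) auto
qed

lemma good_mult: assumes "w \<in> carrier_vec N" "good N w x" "good N w y" shows "good N w (x * y)"
proof -
  obtain Q1 Q2 where Q: "Q1 \<in> carrier_mat N N" "map_mat of_rat Q1 *\<^sub>v w = x \<cdot>\<^sub>v w"
     "Q2 \<in> carrier_mat N N" "map_mat of_rat Q2 *\<^sub>v w = y \<cdot>\<^sub>v w" using assms unfolding good_def by blast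
  have "map_mat of_rat (Q1 * Q2) = map_mat of_rat Q1 * (map_mat of_rat Q2 :: complex mat)"
    using Q by (simp add: of_rat_hom.mat_hom_mult)
  then have "map_mat of_rat (Q1 * Q2) *\<^sub>v w = map_mat of_rat Q1 *\<^sub>v ((map_mat of_rat Q2 :: complex mat) *\<^sub>v w)"
    using Q assms(1) by (simp add: assoc_mult_mat_vec[of _ N N _ N])
  also have "\<dots> = (x * y) \<cdot>\<^sub>v w" using Q assms(1) by (simp add: mult_mat_vec[of _ N N] smult_smult_assoc mult.commute)
  finally show ?thesis unfolding good_def using Q by (intro exI[of _ "Q1*Q2"]) auto
qed

lemma good_rat: assumes "w \<in> carrier_vec N" shows "good N w (of_rat c)"
proof -
  have "map_mat of_rat (c \<cdot>\<^sub>m 1\<^sub>m N) = (of_rat c :: complex) \<cdot>\<^sub>m 1\<^sub>m N"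
    by (auto simp: of_rat_mult)
  then have "map_mat of_rat (c \<cdot>\<^sub>m 1\<^sub>m N) *\<^sub>v w = (of_rat c :: complex) \<cdot>\<^sub>v w"
    using assms by auto
  then show ?thesis unfolding good_def by (intro exI[of _ "c \<cdot>\<^sub>m 1\<^sub>m N"]) auto
qed




lemma alg_rel:
  assumes "algebraic (x::complex)"
  obtains m :: nat and c :: "nat \<Rightarrow> rat" where "m \<ge> 1" "x ^ m = - (\<Sum>i<m. of_rat (c i) * x ^ i)"
proof -
  obtain p :: "int poly" where p: "p \<noteq> 0" "poly (map_poly of_int p) x = 0" using assms by (erule algebraicE')
  define m where "m = degree p"
  define lc where "lc = lead_coeff p"
  have lc: "lc \<noteq> 0" using p lc_def by simp
  define c where "c i = (of_int (coeff p i) / of_int lc :: rat)" for i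
  have dm: "degree (map_poly (of_int :: int \<Rightarrow> complex) p) = m" unfolding m_def
    by (simp add: degree_map_poly)
  have "0 = (\<Sum>i\<le>m. of_int (coeff p i) * x ^ i)" using p(2) unfolding poly_altdef dm
    by (simp add: coeff_map_poly)
  also have "\<dots> = (\<Sum>i<m. of_int (coeff p i) * x ^ i) + of_int lc * x ^ m"
    unfolding lc_def m_def by (simp add: lessThan_Suc_atMost[symmetric])
  finally have e0: "(\<Sum>i<m. of_int (coeff p i) * x ^ i) + of_int lc * x ^ m = 0" by simp
  then have e: "of_int lc * x ^ m = - (\<Sum>i<m. of_int (coeff p i) * x ^ i)"
    by (metis add.commute eq_neg_iff_add_eq_0)
  have "m \<ge> 1"
  proof (rule ccontr)
    assume "\<not> m \<ge> 1" then have "m = 0" by simp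
    with e lc show False by simp
  qed
  moreover have "x ^ m = - (\<Sum>i<m. of_rat (c i) * x ^ i)"
  proof -
    have "x ^ m = (of_int lc * x ^ m) / of_int lc" using lc by simp
    also have "\<dots> = - (\<Sum>i<m. of_int (coeff p i) * x ^ i) / of_int lc" using e by simp
    also have "\<dots> = - (\<Sum>i<m. of_rat (c i) * x ^ i)"
      by (simp add: c_def sum_divide_distrib of_rat_divide)
    finally show ?thesis .
  qed
  ultimately show ?thesis using that by blast
qed

definition compn :: "nat \<Rightarrow> (nat \<Rightarrow> rat) \<Rightarrow> nat \<Rightarrow> nat \<Rightarrow> rat" where
  "compn m c i i' = (if i + 1 < m then (if i' = i + 1 then 1 else 0) else - c i')"

lemma comp_sum:
  assumes "x ^ m = - (\<Sum>i<m. of_rat (c i) * x ^ i)" "i < m"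
  shows "(\<Sum>i'<m. of_rat (compn m c i i') * x ^ i') = (x::complex) ^ (i + 1)"
proof (cases "i + 1 < m")
  case True
  have "(\<Sum>i'<m. of_rat (compn m c i i') * x ^ i') = (\<Sum>i'<m. if i' = i+1 then x ^ i' else 0)"
    by (rule sum.cong) (use True in \<open>auto simp: compn_def\<close>)
  also have "\<dots> = x ^ (i+1)" using True by (simp add: sum.delta)
  finally show ?thesis .
next
  case False
  then have "i + 1 = m" using assms by simp
  then show ?thesis using assms unfolding compn_def by (simp add: sum_negf of_rat_minus)
qed

lemma sum_pairs: fixes g :: "nat \<Rightarrow> 'a::comm_monoid_add" shows "(\<Sum>s<K*m. g s) = (\<Sum>j<K. \<Sum>i<m. g (i + j*m))"
proof -
  have "(\<Sum>s<K*m. g s) = (\<Sum>j<K. sum g {j*m..<j*m+m})" using sum.nat_group[of g m K] by simp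
  also have "\<dots> = (\<Sum>j<K. \<Sum>i<m. g (i + j*m))"
  proof (rule sum.cong[OF refl])
    fix j
    have "sum g {0 + j*m..<m + j*m} = sum (\<lambda>i. g (i + j*m)) {0..<m}" by (rule sum.shift_bounds_nat_ivl)
    then show "sum g {j*m..<j*m+m} = (\<Sum>i<m. g (i + j*m))" by (simp add: atLeast0LessThan add.commute)
  qed
  finally show ?thesis .
qed




lemma mat_vec_entry:
  assumes "t < N" "w \<in> carrier_vec N"
  shows "(map_mat of_rat (mat N N f) *\<^sub>v w) $ t = (\<Sum>s<N. of_rat (f (t, s)) * w $ s)"
  using assms by (simp add: mult_mat_vec_def scalar_prod_def atLeast0LessThan)

lemma common_vec:
  assumes "algebraic al" "algebraic lam"
  shows "\<exists>N w. w \<in> carrier_vec N \<and> w \<noteq> 0\<^sub>v N \<and> good N w al \<and> good N w lam"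
proof -
  obtain m c where m: "m \<ge> 1" "al ^ m = - (\<Sum>i<m. of_rat (c i) * al ^ i)" using alg_rel[OF assms(1)] by blast
  obtain K d where K: "K \<ge> 1" "lam ^ K = - (\<Sum>i<K. of_rat (d i) * lam ^ i)" using alg_rel[OF assms(2)] by blast
  define N where "N = K * m"
  define w where "w = vec N (\<lambda>t. al ^ (t mod m) * lam ^ (t div m))"
  have wc: "w \<in> carrier_vec N" unfolding w_def by simp
  have N0: "0 < N" unfolding N_def using m K by simp
  have "w $ 0 = 1" unfolding w_def using N0 by simp
  then have wnz: "w \<noteq> 0\<^sub>v N" using N0 by auto
  have wi: "w $ (i + j * m) = al ^ i * lam ^ j" if "i < m" "j < K" for i j
  proof -
    have "i + j * m < m + j * m" using that by simp
    also have "\<dots> = Suc j * m" by simp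
    also have "\<dots> \<le> K * m" using that by (intro mult_le_mono1) simp
    finally have "i + j * m < N" unfolding N_def .
    then show ?thesis unfolding w_def using that by simp
  qed
  define Qa where "Qa = mat N N (\<lambda>(t,s). if s div m = t div m then compn m c (t mod m) (s mod m) else 0)"
  define Ql where "Ql = mat N N (\<lambda>(t,s). if s mod m = t mod m then compn K d (t div m) (s div m) else 0)"
  have "map_mat of_rat Qa *\<^sub>v w = al \<cdot>\<^sub>v w"
  proof (rule eq_vecI)
    fix t assume "t < dim_vec (al \<cdot>\<^sub>v w)"
    then have t: "t < N" using wc by simp
    have tm: "t mod m < m" using m by simp
    have tK: "t div m < K" using t unfolding N_def by (simp add: less_mult_imp_div_less)
    have "(map_mat of_rat Qa *\<^sub>v w) $ t = (\<Sum>s<N. of_rat ((\<lambda>(t,s). if s div m = t div m then compn m c (t mod m) (s mod m) else 0) (t, s)) * w $ s)"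
      unfolding Qa_def by (rule mat_vec_entry[OF t wc])
    also have "\<dots> = (\<Sum>j<K. \<Sum>i<m. (if j = t div m then of_rat (compn m c (t mod m) i) * (al ^ i * lam ^ j) else 0))"
      unfolding N_def sum_pairs using m by (intro sum.cong refl) (auto simp: wi)
    also have "\<dots> = (\<Sum>j<K. if j = t div m then (\<Sum>i<m. of_rat (compn m c (t mod m) i) * (al ^ i * lam ^ j)) else 0)"
      by (intro sum.cong) auto
    also have "\<dots> = (\<Sum>i<m. of_rat (compn m c (t mod m) i) * (al ^ i * lam ^ (t div m)))"
      using tK by (simp add: sum.delta)
    also have "\<dots> = (\<Sum>i<m. of_rat (compn m c (t mod m) i) * al ^ i) * lam ^ (t div m)"
      by (simp add: sum_distrib_right mult.assoc)
    also have "\<dots> = al ^ (t mod m + 1) * lam ^ (t div m)" using comp_sum[OF m(2) tm] by simp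
    also have "\<dots> = (al \<cdot>\<^sub>v w) $ t" using t wc unfolding w_def by simp
    finally show "(map_mat of_rat Qa *\<^sub>v w) $ t = (al \<cdot>\<^sub>v w) $ t" .
  qed (use wc in \<open>simp add: Qa_def\<close>)
  moreover have "map_mat of_rat Ql *\<^sub>v w = lam \<cdot>\<^sub>v w"
  proof (rule eq_vecI)
    fix t assume "t < dim_vec (lam \<cdot>\<^sub>v w)"
    then have t: "t < N" using wc by simp
    have tm: "t mod m < m" using m by simp
    have tK: "t div m < K" using t unfolding N_def by (simp add: less_mult_imp_div_less)
    have "(map_mat of_rat Ql *\<^sub>v w) $ t = (\<Sum>s<N. of_rat ((\<lambda>(t,s). if s mod m = t mod m then compn K d (t div m) (s div m) else 0) (t, s)) * w $ s)"
      unfolding Ql_def by (rule mat_vec_entry[OF t wc])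
    also have "\<dots> = (\<Sum>j<K. \<Sum>i<m. (if i = t mod m then of_rat (compn K d (t div m) j) * (al ^ i * lam ^ j) else 0))"
      unfolding N_def sum_pairs using m by (intro sum.cong refl) (auto simp: wi)
    also have "\<dots> = al ^ (t mod m) * (\<Sum>j<K. of_rat (compn K d (t div m) j) * lam ^ j)"
      using tm by (simp add: sum.delta sum_distrib_left mult.assoc mult.left_commute cong: if_cong)
    also have "\<dots> = al ^ (t mod m) * lam ^ (t div m + 1)" using comp_sum[OF K(2) tK] by simp
    also have "\<dots> = (lam \<cdot>\<^sub>v w) $ t" using t wc unfolding w_def by simp
    finally show "(map_mat of_rat Ql *\<^sub>v w) $ t = (lam \<cdot>\<^sub>v w) $ t" .
  qed (use wc in \<open>simp add: Ql_def\<close>)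
  moreover have "Qa \<in> carrier_mat N N" "Ql \<in> carrier_mat N N" unfolding Qa_def Ql_def by auto
  ultimately show ?thesis using wc wnz unfolding good_def by blast
qed




lemma tele:
  fixes X :: "nat \<Rightarrow> real"
  assumes pos: "\<And>k. X k > 0"
    and up: "\<And>k. X (Suc k) \<le> 2 * X k ^ 2"
    and lo: "\<And>k. X (Suc k) \<ge> X k ^ 2 / 2 ^ (Suc k)"
    and "n0 \<le> n"
  shows "\<bar>ln (X n) / 2 ^ n - ln (X n0) / 2 ^ n0\<bar> \<le> 4 * ln 2"
proof -
  define D where "D k = ln (X k) / 2 ^ k" for k
  define g where "g k = (real k + 2) / 2 ^ k" for k
  have stepU: "D (Suc k) - D k \<le> ln 2 / 2 ^ Suc k" for k
  proof -
    have "ln (X (Suc k)) \<le> ln (2 * X k ^ 2)" using up[of k] pos[of "Suc k"] pos[of k] by (subst ln_le_cancel_iff) auto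
    also have "\<dots> = ln 2 + 2 * ln (X k)" using pos[of k] by (simp add: ln_mult ln_realpow)
    finally have "ln (X (Suc k)) \<le> ln 2 + 2 * ln (X k)" .
    then have h: "ln (X (Suc k)) - 2 * ln (X k) \<le> ln 2" by simp
    have e: "D (Suc k) - D k = (ln (X (Suc k)) - 2*ln (X k)) / 2^Suc k" unfolding D_def by (simp add: field_simps)
    show ?thesis unfolding e by (rule divide_right_mono[OF h]) simp
  qed
  have stepL: "D k - D (Suc k) \<le> ln 2 * (g k - g (Suc k))" for k
  proof -
    have "ln (X k ^ 2 / 2 ^ Suc k) \<le> ln (X (Suc k))" using lo[of k] pos[of k] pos[of "Suc k"] by (subst ln_le_cancel_iff) auto
    moreover have "ln (X k ^ 2 / 2 ^ Suc k) = 2 * ln (X k) - real (Suc k) * ln 2"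
      using pos[of k] by (simp add: ln_div ln_mult ln_realpow algebra_simps)
    ultimately have h: "2 * ln (X k) - real (Suc k) * ln 2 \<le> ln (X (Suc k))" by simp
    have "g k - g (Suc k) = (real k + 1) / 2 ^ Suc k" unfolding g_def by (simp add: field_simps)
    have h': "2 * ln (X k) - ln (X (Suc k)) \<le> ln 2 * (real k + 1)" using h by (simp add: algebra_simps)
    have e: "D k - D (Suc k) = (2 * ln (X k) - ln (X (Suc k))) / 2^Suc k" unfolding D_def by (simp add: field_simps)
    have "D k - D (Suc k) \<le> ln 2 * (real k + 1) / 2^Suc k" unfolding e by (rule divide_right_mono[OF h']) simp
    then show ?thesis using \<open>g k - g (Suc k) = _\<close> by simp
  qed
  obtain d where n: "n = n0 + d" using assms(4) le_Suc_ex by blast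
  have main: "D (n0 + d) - D n0 \<le> ln 2 * (1 / 2 ^ n0 - 1 / 2 ^ (n0 + d)) \<and>
              D n0 - D (n0 + d) \<le> ln 2 * (g n0 - g (n0 + d))" for d
  proof (induction d)
    case 0 then show ?case by simp
  next
    case (Suc d)
    have a: "1 / 2 ^ (n0 + d) - 1 / (2::real) ^ Suc (n0 + d) = 1 / 2 ^ Suc (n0 + d)" by (simp add: field_simps)
    have e1: "ln 2 * (1 / 2 ^ n0 - 1 / 2 ^ Suc (n0 + d)) = ln 2 * (1 / 2 ^ n0 - 1 / 2 ^ (n0 + d)) + ln 2 * (1 / 2 ^ (n0 + d) - 1 / (2::real) ^ Suc (n0 + d))"
      by (simp add: right_diff_distrib)
    have e2: "ln 2 * (g n0 - g (Suc (n0 + d))) = ln 2 * (g n0 - g (n0 + d)) + ln 2 * (g (n0 + d) - g (Suc (n0 + d)))"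
      by (simp add: right_diff_distrib)
    have "ln 2 * (1 / 2 ^ (n0 + d) - 1 / (2::real) ^ Suc (n0 + d)) = ln 2 / 2 ^ Suc (n0 + d)" unfolding a by simp
    then show ?case using Suc stepU[of "n0 + d"] stepL[of "n0 + d"] e1 e2
      by simp
  qed
  have g0: "g k \<ge> 0" for k unfolding g_def by simp
  have g2: "g n0 \<le> 2"
  proof -
    have "real n0 + 2 \<le> 2 * 2 ^ n0"
    proof (induction n0)
      case 0 then show ?case by simp
    next
      case (Suc n) then show ?case by simp
    qed
    then show ?thesis unfolding g_def by (simp add: field_simps)
  qed
  have p1: "1 / (2::real) ^ n0 \<le> 1" by simp
  have p2: "1 / (2::real) ^ (n0+d) \<ge> 0" by simp
  have l2: "ln (2::real) > 0" by simp
  have "1 / 2 ^ n0 - 1 / 2 ^ (n0 + d) \<le> (1::real)" using p1 p2 by linarith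
  then have m1: "ln (2::real) * (1 / 2 ^ n0 - 1 / 2 ^ (n0 + d)) \<le> ln 2 * 1" by (rule mult_left_mono) (use l2 in simp)
  have A: "D n - D n0 \<le> ln 2" unfolding n using main[of d] m1 by linarith
  have "g n0 - g (n0 + d) \<le> 2" using g2 g0[of "n0+d"] by linarith
  then have m2: "ln (2::real) * (g n0 - g (n0 + d)) \<le> ln 2 * 2" by (rule mult_left_mono) (use l2 in simp)
  have B: "D n0 - D n \<le> 2 * ln 2" unfolding n using main[of d] m2 by linarith
  show ?thesis using A B l2 unfolding D_def by linarith
qed




lemma low_gen:
  fixes a b a' b' l :: real
  assumes "0\<le>a" "0\<le>b" "0\<le>a'" "0\<le>b'" "0<l" "l\<le>1"
    "a^4 \<le> a'*a^2 + l*b'^2" "l*b^4 \<le> a'*b^2 + b'^2" "0 < max a b"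
  shows "max a' b' \<ge> l * (max a b)^2 / 2"
proof (rule ccontr)
  define M where "M = max a b"
  define M' where "M' = max a' b'"
  assume "\<not> ?thesis"
  then have lt: "M' < l * M^2 / 2" unfolding M_def M'_def by simp
  have M'0: "M' \<ge> 0" unfolding M'_def using assms by simp
  have M0: "M > 0" unfolding M_def using assms by simp
  have aM: "a \<le> M" "b \<le> M" "a' \<le> M'" "b' \<le> M'" unfolding M_def M'_def by auto
  have key: "l * M^4 \<le> M' * M^2 + M'^2"
  proof -
    have t1: "a' * a^2 \<le> M' * M^2" using aM assms by (intro mult_mono power_mono) auto
    have t2: "a' * b^2 \<le> M' * M^2" using aM assms by (intro mult_mono power_mono) auto
    have t3: "b'^2 \<le> M'^2" using aM assms by (intro power_mono) auto
    have t4: "l * b'^2 \<le> M'^2" using t3 assms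
      by (metis mult_left_le_one_le zero_le_power2 order_trans less_imp_le)
    have t5: "l * a^4 \<le> a^4" using assms by (simp add: mult_left_le_one_le)
    show ?thesis
    proof (cases "a \<le> b")
      case True then have "M = b" unfolding M_def by simp
      then show ?thesis using t2 t3 assms(8) by simp
    next
      case False then have "M = a" unfolding M_def by simp
      then show ?thesis using t1 t4 t5 assms(7) by simp
    qed
  qed
  have s1: "M' * M^2 < l * M^4 / 2"
  proof -
    have "M' * M^2 < (l * M^2 / 2) * M^2" using lt M0 by (intro mult_strict_right_mono) auto
    then show ?thesis by (simp add: power_def field_simps)
  qed
  have s2: "M'^2 \<le> (l * M^2 / 2)^2" using lt M'0 by (intro power_mono) auto
  have s3: "(l * M^2 / 2)^2 \<le> l * M^4 / 4"
  proof -
    have "(l * M^2 / 2)^2 = l * (l * M^4) / 4" by (simp add: power_def field_simps)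
    also have "\<dots> \<le> 1 * (l * M^4) / 4" using assms M0
      by (intro divide_right_mono mult_right_mono) auto
    finally show ?thesis by simp
  qed
  have "l * M^4 > 0" using assms M0 by simp
  then show False using key s1 s2 s3 by linarith
qed

lemma inv_step:
  fixes a b a' b' l c :: real
  assumes "0\<le>b" "0 \<le> l" "c \<ge> 1" "a \<ge> c * b" "a' \<ge> a^2 - l * b^2" "b' = a * b"
  shows "a' \<ge> (c - l) * b'"
proof -
  have "1 * b \<le> c * b" using assms by (intro mult_right_mono) auto
  then have "a \<ge> b" using assms by simp
  have "a^2 - l*b^2 - (c - l) * (a*b) = a * (a - c*b) + l * b * (a - b)"
    by (simp add: power2_eq_square algebra_simps)
  also have "\<dots> \<ge> 0" using assms \<open>a \<ge> b\<close> by (intro add_nonneg_nonneg mult_nonneg_nonneg) auto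
  finally show ?thesis using assms by simp
qed




lemma AB_rec:
  "A_seq al lam (Suc k) = A_seq al lam k ^ 2 + lam * B_seq al lam k ^ 2"
  "B_seq al lam (Suc k) = A_seq al lam k * B_seq al lam k"
  by (simp_all add: A_seq_def B_seq_def split: prod.splits)

lemma AB0: "A_seq al lam 0 = al" "B_seq al lam 0 = 1"
  by (simp_all add: A_seq_def B_seq_def)

lemma step_facts:
  assumes av: "is_abs_value_on_Qbar v"
    and SQ: "S \<subseteq> Qbar" and Sadd: "\<And>x y. x\<in>S \<Longrightarrow> y\<in>S \<Longrightarrow> x+y \<in> S"
    and Smul: "\<And>x y. x\<in>S \<Longrightarrow> y\<in>S \<Longrightarrow> x*y \<in> S" and Sm1: "-1 \<in> S"
    and alS: "al \<in> S" and lamS: "lam \<in> S"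
  defines "a \<equiv> \<lambda>k. v (A_seq al lam k)" and "b \<equiv> \<lambda>k. v (B_seq al lam k)" and "l \<equiv> v lam"
  shows "a k \<ge> 0 \<and> b k \<ge> 0 \<and> b 0 = 1 \<and> a 0 = v al \<and>
         a (Suc k) \<le> a k ^ 2 + l * b k ^ 2 \<and> a (Suc k) \<ge> a k ^ 2 - l * b k ^ 2 \<and>
         b (Suc k) = a k * b k \<and> a k ^ 4 \<le> a (Suc k) * a k ^ 2 + l * b (Suc k) ^ 2 \<and>
         l * b k ^ 4 \<le> a (Suc k) * b k ^ 2 + b (Suc k) ^ 2"
proof -
  have S1: "1 \<in> S" using Smul[OF Sm1 Sm1] by simp
  have Spow: "x \<in> S \<Longrightarrow> x ^ n \<in> S" for x n by (induction n) (auto intro: S1 Smul)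
  have vnn: "x \<in> S \<Longrightarrow> v x \<ge> 0" for x using av SQ unfolding is_abs_value_on_Qbar_def by (meson subsetD)
  have vm: "x \<in> S \<Longrightarrow> y \<in> S \<Longrightarrow> v (x * y) = v x * v y" for x y
    using av SQ unfolding is_abs_value_on_Qbar_def by (meson subsetD)
  have va: "x \<in> S \<Longrightarrow> y \<in> S \<Longrightarrow> v (x + y) \<le> v x + v y" for x y
    using av SQ unfolding is_abs_value_on_Qbar_def by (meson subsetD)
  have v1: "v 1 = 1"
  proof -
    have "v 1 \<noteq> 0" using av SQ S1 unfolding is_abs_value_on_Qbar_def by auto
    moreover have "v 1 = v 1 * v 1" using vm[OF S1 S1] by simp
    ultimately show ?thesis by simp
  qed
  have vm1: "v (-1) = 1"
  proof -
    have "v (-1) * v (-1) = 1" using vm[OF Sm1 Sm1] v1 by simp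
    moreover have "v (-1) \<ge> 0" using vnn[OF Sm1] .
    ultimately show ?thesis by (metis mult_cancel_right1 nle_le not_one_le_zero mult_le_cancel_right1 mult_le_one order_le_less)
  qed
  have vsub: "x \<in> S \<Longrightarrow> y \<in> S \<Longrightarrow> v (x + y) \<ge> v x - v y" for x y
  proof -
    assume xy: "x \<in> S" "y \<in> S"
    have "x = (x + y) + (-1) * y" by simp
    then have "v x \<le> v (x + y) + v ((-1) * y)" using va[of "x+y" "(-1)*y"] xy Sadd Smul Sm1 by metis
    also have "v ((-1) * y) = v y" using vm[OF Sm1 xy(2)] vm1 by simp
    finally show ?thesis by simp
  qed
  have vpow: "x \<in> S \<Longrightarrow> v (x ^ n) = v x ^ n" for x n
    by (induction n) (auto simp: v1 vm Spow)
  have AB: "A_seq al lam k \<in> S \<and> B_seq al lam k \<in> S" for k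
    by (induction k) (auto simp: AB_rec AB0 alS S1 intro!: Sadd Smul Spow lamS)
  define A where "A = A_seq al lam k"
  define B where "B = B_seq al lam k"
  define A' where "A' = A_seq al lam (Suc k)"
  define B' where "B' = B_seq al lam (Suc k)"
  have AS: "A \<in> S" "B \<in> S" "A' \<in> S" "B' \<in> S" unfolding A_def B_def A'_def B'_def using AB by auto
  have rA: "A' = A ^ 2 + lam * B ^ 2" and rB: "B' = A * B" unfolding A_def B_def A'_def B'_def AB_rec by simp_all
  have f1: "a (Suc k) \<le> a k ^ 2 + l * b k ^ 2"
  proof -
    have "v A' \<le> v (A^2) + v (lam * B^2)" unfolding rA using AS by (intro va) (auto intro: Spow Smul lamS)
    then show ?thesis using AS unfolding a_def b_def l_def A_def[symmetric] B_def[symmetric] A'_def[symmetric]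
      by (simp add: vpow vm Spow lamS)
  qed
  have f2: "a (Suc k) \<ge> a k ^ 2 - l * b k ^ 2"
  proof -
    have "v A' \<ge> v (A^2) - v (lam * B^2)" unfolding rA using AS by (intro vsub) (auto intro: Spow Smul lamS)
    then show ?thesis using AS unfolding a_def b_def l_def A_def[symmetric] B_def[symmetric] A'_def[symmetric]
      by (simp add: vpow vm Spow lamS)
  qed
  have f3: "b (Suc k) = a k * b k" using AS unfolding a_def b_def B'_def[symmetric] A_def[symmetric] B_def[symmetric] rB
    by (simp add: vm)
  have f4: "a k ^ 4 \<le> a (Suc k) * a k ^ 2 + l * b (Suc k) ^ 2"
  proof -
    have "A ^ 4 = A' * A^2 + (-1) * lam * B'^2" unfolding rA rB by (simp add: algebra_simps power_def)
    then have "v (A ^ 4) \<le> v (A' * A^2) + v ((-1) * lam * B'^2)" using AS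
      by (metis va Smul Spow Sm1 lamS)
    moreover have "v ((-1) * lam * B'^2) = v lam * v B' ^ 2"
      using vm[of "(-1) * lam" "B'^2"] vm[OF Sm1 lamS] vm1 vpow[OF AS(4)] Smul[OF Sm1 lamS] Spow[OF AS(4)] by simp
    ultimately show ?thesis using AS unfolding a_def b_def l_def A_def[symmetric] B'_def[symmetric] A'_def[symmetric]
      by (simp add: vpow vm Spow lamS Smul Sm1 vm1)
  qed
  have f5: "l * b k ^ 4 \<le> a (Suc k) * b k ^ 2 + b (Suc k) ^ 2"
  proof -
    have "lam * B ^ 4 = A' * B^2 + (-1) * B'^2" unfolding rA rB by (simp add: algebra_simps power_def)
    then have "v (lam * B ^ 4) \<le> v (A' * B^2) + v ((-1) * B'^2)" using AS
      by (metis va Smul Spow Sm1)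
    moreover have "v ((-1) * B'^2) = v B' ^ 2"
      using vm[OF Sm1 Spow[OF AS(4)]] vm1 vpow[OF AS(4)] by simp
    ultimately show ?thesis using AS unfolding a_def b_def l_def B_def[symmetric] B'_def[symmetric] A'_def[symmetric]
      by (simp add: vpow vm Spow lamS Smul Sm1 vm1)
  qed
  show ?thesis using f1 f2 f3 f4 f5 AB vnn v1 unfolding a_def b_def by (simp add: AB0)
qed




lemma seq_bounds:
  fixes a b :: "nat \<Rightarrow> real" and l a0 :: real
  assumes F: "\<And>k. a k \<ge> 0 \<and> b k \<ge> 0 \<and> b 0 = 1 \<and> a 0 = a0 \<and>
         a (Suc k) \<le> a k ^ 2 + l * b k ^ 2 \<and> a (Suc k) \<ge> a k ^ 2 - l * b k ^ 2 \<and>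
         b (Suc k) = a k * b k \<and> a k ^ 4 \<le> a (Suc k) * a k ^ 2 + l * b (Suc k) ^ 2 \<and>
         l * b k ^ 4 \<le> a (Suc k) * b k ^ 2 + b (Suc k) ^ 2"
    and a0: "a0 \<ge> 2" and l: "0 < l" "l \<le> 1/2"
  defines "X \<equiv> \<lambda>k. max (a k) (b k)"
  shows "X k > 0 \<and> X (Suc k) \<le> 2 * X k ^ 2 \<and> X (Suc k) \<ge> X k ^ 2 / 2 ^ Suc k"
proof -
  have inv: "a0 - real k * l \<ge> 1 \<Longrightarrow> a k \<ge> (a0 - real k * l) * b k" for k
  proof (induction k)
    case 0 then show ?case using F[of 0] by simp
  next
    case (Suc k)
    have c1: "a0 - real k * l \<ge> 1" using Suc.prems l by (simp add: algebra_simps)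
    have "a (Suc k) \<ge> ((a0 - real k * l) - l) * b (Suc k)"
      using inv_step[of "b k" l "a0 - real k * l" "a k" "a (Suc k)" "b (Suc k)"] Suc.IH[OF c1] c1 F[of k] l
      by simp
    then show ?case by (simp add: algebra_simps)
  qed
  have low: "X (Suc k) \<ge> l * X k ^ 2 / 2" if "X k > 0" for k
    unfolding X_def using low_gen[of "a k" "b k" "a (Suc k)" "b (Suc k)" l] F[of k] F[of "Suc k"] l that unfolding X_def by auto
  have pos: "X k > 0" for k
  proof (induction k)
    case 0 then show ?case using F[of 0] unfolding X_def by simp
  next
    case (Suc k)
    have "l * X k ^ 2 / 2 > 0" using Suc l by simp
    then show ?case using low[OF Suc] by linarith
  qed
  have up: "X (Suc k) \<le> 2 * X k ^ 2"
  proof -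
    have ab: "0 \<le> a k" "a k \<le> X k" "0 \<le> b k" "b k \<le> X k" using F[of k] unfolding X_def by auto
    have "a k ^ 2 \<le> X k ^ 2" "b k ^ 2 \<le> X k ^ 2" using ab by (auto intro: power_mono)
    moreover have "l * b k ^ 2 \<le> b k ^ 2" using l by (intro mult_left_le_one_le) auto
    moreover have "a k * b k \<le> X k * X k" using ab by (intro mult_mono) auto
    ultimately show ?thesis using F[of k] unfolding X_def by (auto simp: power2_eq_square)
  qed
  have lo: "X (Suc k) \<ge> X k ^ 2 / 2 ^ Suc k"
  proof (cases "a0 - real k * l \<ge> 1")
    case True
    have "1 * b k \<le> (a0 - real k * l) * b k" using True F[of k] by (intro mult_right_mono) auto
    then have ba: "b k \<le> a k" using inv[OF True] by simp
    then have Xa: "X k = a k" unfolding X_def by simp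
    have "l * b k ^ 2 \<le> (1/2) * a k ^ 2" using l ba F[of k] by (intro mult_mono power_mono) auto
    then have "a (Suc k) \<ge> a k ^ 2 / 2" using F[of k] by simp
    moreover have "a k ^ 2 / 2 ^ Suc k \<le> a k ^ 2 / 2"
      by (intro divide_left_mono) (auto simp: Suc_le_eq)
    ultimately show ?thesis unfolding Xa unfolding X_def by simp
  next
    case False
    then have kl: "real k * l > 1" using a0 by simp
    have "real k < 2 ^ k" by (rule of_nat_less_two_power)
    then have "2 ^ k * l > 1" using kl l
      by (smt (verit, ccfv_SIG) mult_strict_right_mono)
    then have "1 / 2 ^ Suc k \<le> l / 2" by (simp add: field_simps)
    then have "X k ^ 2 / 2 ^ Suc k \<le> l * X k ^ 2 / 2"
      using mult_left_mono[of "1 / 2 ^ Suc k" "l/2" "X k ^ 2"] by (simp add: mult.commute)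
    then show ?thesis using low[OF pos[of k]] by linarith
  qed
  show ?thesis using pos up lo by blast
qed


theorem proposition6p2:
  fixes M :: real and al lam :: complex and v :: "complex \<Rightarrow> real" and n0 n :: nat
  assumes "M \<ge> 1"
    and "al \<in> Qbar" and "lam \<in> Qbar"
    and "is_abs_value_on_Qbar v"
    and "lam \<noteq> 0"
    and "v al \<ge> 1 / (M * v lam)"
    and "1 / (M * v lam) \<ge> 2 * M"
    and "n0 \<le> n"
  shows "\<bar>ln (Mnv v al lam n) / 2 ^ n - ln (Mnv v al lam n0) / 2 ^ n0\<bar> \<le> 4 * ln 2"
proof -
  have l0: "v lam > 0"
  proof -
    have "v lam \<ge> 0" "v lam \<noteq> 0" using assms(3,4,5) unfolding is_abs_value_on_Qbar_def by auto
    then show ?thesis by simp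
  qed
  have Ml: "M * v lam > 0" using assms(1) l0 by simp
  have "2 * M * (M * v lam) \<le> 1" using assms(7) Ml by (simp add: field_simps)
  moreover have "v lam \<le> M * M * v lam"
  proof -
    have "1 \<le> M * M" using assms(1) by (metis mult_mono' mult_1 zero_le_one order_trans)
    then show ?thesis using mult_right_mono[of 1 "M*M" "v lam"] l0 by simp
  qed
  ultimately have l12: "v lam \<le> 1/2" by (simp add: algebra_simps)
  have a2: "v al \<ge> 2" using assms(1,6,7) by linarith
  obtain N w where Nw: "w \<in> carrier_vec N" "w \<noteq> 0\<^sub>v N" "good N w al" "good N w lam"
    using common_vec[of al lam] assms(2,3) unfolding Qbar_def by blast
  define S where "S = {z. good N w z}"
  have SQ: "S \<subseteq> Qbar" unfolding S_def Qbar_def good_def using good_alg Nw(1,2) by blast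
  have Sadd: "\<And>x y. x\<in>S \<Longrightarrow> y\<in>S \<Longrightarrow> x+y \<in> S" unfolding S_def using good_add[OF Nw(1)] by blast
  have Smul: "\<And>x y. x\<in>S \<Longrightarrow> y\<in>S \<Longrightarrow> x*y \<in> S" unfolding S_def using good_mult[OF Nw(1)] by blast
  have Sm1: "-1 \<in> S" unfolding S_def using good_rat[OF Nw(1), of "-1"] by simp
  have F: "\<And>k. v (A_seq al lam k) \<ge> 0 \<and> v (B_seq al lam k) \<ge> 0 \<and> v (B_seq al lam 0) = 1 \<and> v (A_seq al lam 0) = v al \<and>
         v (A_seq al lam (Suc k)) \<le> v (A_seq al lam k) ^ 2 + v lam * v (B_seq al lam k) ^ 2 \<and>
         v (A_seq al lam (Suc k)) \<ge> v (A_seq al lam k) ^ 2 - v lam * v (B_seq al lam k) ^ 2 \<and>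
         v (B_seq al lam (Suc k)) = v (A_seq al lam k) * v (B_seq al lam k) \<and>
         v (A_seq al lam k) ^ 4 \<le> v (A_seq al lam (Suc k)) * v (A_seq al lam k) ^ 2 + v lam * v (B_seq al lam (Suc k)) ^ 2 \<and>
         v lam * v (B_seq al lam k) ^ 4 \<le> v (A_seq al lam (Suc k)) * v (B_seq al lam k) ^ 2 + v (B_seq al lam (Suc k)) ^ 2"
    using step_facts[OF assms(4) SQ Sadd Smul Sm1] Nw(3,4) unfolding S_def by blast
  have B: "\<And>k. Mnv v al lam k > 0 \<and> Mnv v al lam (Suc k) \<le> 2 * Mnv v al lam k ^ 2 \<and>
      Mnv v al lam (Suc k) \<ge> Mnv v al lam k ^ 2 / 2 ^ Suc k"
    unfolding Mnv_def by (rule seq_bounds[OF F a2 l0 l12])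
  show ?thesis by (rule tele) (use B assms(8) in auto)
qed

end
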